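(* Let $\mathcal H$, $\mathcal O$, $\mathcal U$, $e_a$, $X_{e_a}$, $Y_{e_a}$ be as in the context. Identify $\mathcal O^*$ with $\mathcal O$ via $\xi(a)=\operatorname{tr}(\widetilde\xi a)$, and for $1\le k\le n$ let $\mathcal D^k=\{\xi\in\mathcal O^*:\widetilde\xi\ge0,\ \operatorname{tr}\widetilde\xi=1,\ \operatorname{rank}\widetilde\xi=k\}$ (the density operators of rank $k$), which is a smooth embedded submanifold of $\mathcal O^*$ contained in $\mathcal U$. Then for every $a\in\mathcal O$ and every $k$, the vector fields $X_{e_a}$ and $Y_{e_a}$ are tangent to $\mathcal D^k$ at every point of $\mathcal D^k$. Explicitly, at $\rho\in\mathcal D^k$, the tangent vectors $X_{e_a}(\rho)$ and $Y_{e_a}(\rho)$ correspond to the Hermitian operators $\tfrac{i}{2}[a,\widetilde\rho]$ and $\tfrac12(a\widetilde\rho+\widetilde\rho a)-\operatorname{tr}(\widetilde\rho a)\widetilde\rho$ respectively.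
   Context: $\mathcal H$ is a complex Hilbert space of dimension $n<\infty$; $\mathcal O$ the real vector space of Hermitian operators; $[[a,b]]=-\tfrac{i}{2}(ab-ba)$, $a\odot b=\tfrac12(ab+ba)$; $f_a(\xi)=\xi(a)$; $\mathcal U=\{\xi:\xi(\mathbb I)\neq0\}$; $e_a=f_a/f_{\mathbb I}$ on $\mathcal U$. $\Lambda_{\mathcal D},\mathcal R_{\mathcal D}$ are the contravariant 2-tensors on $\mathcal U$ with $\Lambda_{\mathcal D}(de_a,de_b)=e_{[[a,b]]}$, $\mathcal R_{\mathcal D}(de_a,de_b)=e_{a\odot b}-e_ae_b$, and all pairings of $df_{\mathbb I}$ with $de_a$ or $df_{\mathbb I}$ equal to $0$; $X_f(g)=\Lambda_{\mathcal D}(df,dg)$, $Y_f(g)=\mathcal R_{\mathcal D}(df,dg)$. *)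

theory Defs
  imports "HOL-Analysis.Analysis"
begin

text \<open>H = complex n-space with n = CARD('n). Operators are complex n x n matrices.
  Elements xi of O* are identified with Hermitian matrices via xi(a) = tr(xi a).\<close>

type_synonym 'n cmat = "complex^'n^'n"

definition adj :: "('n::finite) cmat \<Rightarrow> ('n::finite) cmat" where
  "adj A = (\<chi> i j. cnj (A $ j $ i))"

definition hermitian :: "('n::finite) cmat \<Rightarrow> bool" where
  "hermitian A \<longleftrightarrow> adj A = A"

definition cscale :: "complex \<Rightarrow> ('n::finite) cmat \<Rightarrow> ('n::finite) cmat" where
  "cscale c A = (\<chi> i j. c * A $ i $ j)"

definition psd :: "('n::finite) cmat \<Rightarrow> bool" where
  "psd A \<longleftrightarrow> (\<forall>x::complex^'n. 0 \<le> Re (\<Sum>i\<in>UNIV. cnj (x $ i) * (A *v x) $ i))"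

definition qbracket :: "('n::finite) cmat \<Rightarrow> ('n::finite) cmat \<Rightarrow> ('n::finite) cmat" where
  "qbracket a b = cscale (- \<i> / 2) (a ** b - b ** a)"

definition jordan :: "('n::finite) cmat \<Rightarrow> ('n::finite) cmat \<Rightarrow> ('n::finite) cmat" where
  "jordan a b = cscale (1/2) (a ** b + b ** a)"

text \<open>f_a(xi) = xi(a) = tr(xi a) (real for Hermitian xi, a)\<close>
definition f_obs :: "('n::finite) cmat \<Rightarrow> ('n::finite) cmat \<Rightarrow> real" where
  "f_obs a \<xi> = Re (trace (\<xi> ** a))"

definition U_set :: "('n::finite) cmat set" where
  "U_set = {\<xi>. hermitian \<xi> \<and> f_obs (mat 1) \<xi> \<noteq> 0}"

definition e_obs :: "('n::finite) cmat \<Rightarrow> ('n::finite) cmat \<Rightarrow> real" where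
  "e_obs a \<xi> = f_obs a \<xi> / f_obs (mat 1) \<xi>"

definition dd :: "(('n::finite) cmat \<Rightarrow> real) \<Rightarrow> ('n::finite) cmat \<Rightarrow> (('n::finite) cmat \<Rightarrow> real)" where
  "dd g \<xi> = frechet_derivative g (at \<xi>)"

text \<open>A contravariant 2-tensor at a point: real bilinear form on covectors.\<close>
definition bilin_cov :: "((('n::finite) cmat \<Rightarrow> real) \<Rightarrow> (('n::finite) cmat \<Rightarrow> real) \<Rightarrow> real) \<Rightarrow> bool" where
  "bilin_cov B \<longleftrightarrow>
     (\<forall>p q r (c::real). linear p \<longrightarrow> linear q \<longrightarrow> linear r \<longrightarrow>
        B (\<lambda>v. p v + q v) r = B p r + B q r \<and>
        B r (\<lambda>v. p v + q v) = B r p + B r q \<and>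
        B (\<lambda>v. c * p v) r = c * B p r \<and>
        B r (\<lambda>v. c * p v) = c * B r p)"

definition Lambda_D ::
  "(('n::finite) cmat \<Rightarrow> (('n::finite) cmat \<Rightarrow> real) \<Rightarrow> (('n::finite) cmat \<Rightarrow> real) \<Rightarrow> real) \<Rightarrow> bool" where
  "Lambda_D L \<longleftrightarrow> (\<forall>\<xi>\<in>U_set. bilin_cov (L \<xi>) \<and>
     (\<forall>a b. hermitian a \<longrightarrow> hermitian b \<longrightarrow>
        L \<xi> (dd (e_obs a) \<xi>) (dd (e_obs b) \<xi>) = e_obs (qbracket a b) \<xi>) \<and>
     (\<forall>a. hermitian a \<longrightarrow> L \<xi> (dd (f_obs (mat 1)) \<xi>) (dd (e_obs a) \<xi>) = 0 \<and>
                           L \<xi> (dd (e_obs a) \<xi>) (dd (f_obs (mat 1)) \<xi>) = 0) \<and>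
     L \<xi> (dd (f_obs (mat 1)) \<xi>) (dd (f_obs (mat 1)) \<xi>) = 0)"

definition R_D ::
  "(('n::finite) cmat \<Rightarrow> (('n::finite) cmat \<Rightarrow> real) \<Rightarrow> (('n::finite) cmat \<Rightarrow> real) \<Rightarrow> real) \<Rightarrow> bool" where
  "R_D R \<longleftrightarrow> (\<forall>\<xi>\<in>U_set. bilin_cov (R \<xi>) \<and>
     (\<forall>a b. hermitian a \<longrightarrow> hermitian b \<longrightarrow>
        R \<xi> (dd (e_obs a) \<xi>) (dd (e_obs b) \<xi>) = e_obs (jordan a b) \<xi> - e_obs a \<xi> * e_obs b \<xi>) \<and>
     (\<forall>a. hermitian a \<longrightarrow> R \<xi> (dd (f_obs (mat 1)) \<xi>) (dd (e_obs a) \<xi>) = 0 \<and>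
                           R \<xi> (dd (e_obs a) \<xi>) (dd (f_obs (mat 1)) \<xi>) = 0) \<and>
     R \<xi> (dd (f_obs (mat 1)) \<xi>) (dd (f_obs (mat 1)) \<xi>) = 0)"

definition density_rank :: "nat \<Rightarrow> ('n::finite) cmat set" where
  "density_rank k = {\<rho>. hermitian \<rho> \<and> psd \<rho> \<and> trace \<rho> = 1 \<and> rank \<rho> = k}"

definition tangent_to :: "('n::finite) cmat set \<Rightarrow> ('n::finite) cmat \<Rightarrow> ('n::finite) cmat \<Rightarrow> bool" where
  "tangent_to S p v \<longleftrightarrow> (\<exists>\<epsilon>>0. \<exists>\<gamma>::real \<Rightarrow> ('n::finite) cmat.
      \<gamma> C1_differentiable_on {-\<epsilon><..<\<epsilon>} \<and> (\<forall>t\<in>{-\<epsilon><..<\<epsilon>}. \<gamma> t \<in> S) \<and>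
      \<gamma> 0 = p \<and> (\<gamma> has_vector_derivative v) (at 0))"

end

theory Submission
  imports Defs
begin


lemma adj_adj[simp]: "adj (adj A) = A" by (simp add: adj_def vec_eq_iff)
lemma adj_add: "adj (A + B) = adj A + adj B" by (simp add: adj_def vec_eq_iff)
lemma adj_diff: "adj (A - B) = adj A - adj B" by (simp add: adj_def vec_eq_iff)
lemma adj_mult: "adj (A ** B) = adj B ** adj A"
  by (simp add: adj_def vec_eq_iff matrix_matrix_mult_def cnj_sum mult.commute)
lemma adj_cscale: "adj (cscale c A) = cscale (cnj c) (adj A)"
  by (simp add: adj_def cscale_def vec_eq_iff)
lemma adj_mat1: "adj (mat 1) = mat 1" by (simp add: adj_def mat_def vec_eq_iff)
lemma adj_scaleR: "adj (r *\<^sub>R A) = r *\<^sub>R adj A" by (simp add: adj_def vec_eq_iff)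
lemma cscale_mult_left: "cscale c A ** B = cscale c (A ** B)"
  by (simp add: cscale_def vec_eq_iff matrix_matrix_mult_def sum_distrib_left mult.assoc)
lemma cscale_mult_right: "A ** cscale c B = cscale c (A ** B)"
  by (simp add: cscale_def vec_eq_iff matrix_matrix_mult_def sum_distrib_left algebra_simps)
lemma cscale_add: "cscale c (A + B) = cscale c A + cscale c B"
  by (simp add: cscale_def vec_eq_iff algebra_simps)
lemma cscale_diff: "cscale c (A - B) = cscale c A - cscale c B"
  by (simp add: cscale_def vec_eq_iff algebra_simps)
lemma cscale_real: "cscale (of_real r) A = r *\<^sub>R A"
  unfolding cscale_def vec_eq_iff by (simp add: scaleR_conv_of_real[where 'a=complex])
lemma trace_cscale: "trace (cscale c A) = c * trace A"
  by (simp add: cscale_def trace_def sum_distrib_left)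
lemma trace_scaleR: "trace (r *\<^sub>R (A::'n::finite cmat)) = of_real r * trace A"
  using cscale_real[of r A] trace_cscale[of "of_real r" A] by simp
lemma trace_adj: "trace (adj A) = cnj (trace A)"
  by (simp add: adj_def trace_def cnj_sum)
lemma mult_add_right: "(A + B) ** (C::'n::finite cmat) = A ** C + B ** C"
  by (simp add: vec_eq_iff matrix_matrix_mult_def algebra_simps sum.distrib)
lemma mult_diff_right: "(A - B) ** (C::'n::finite cmat) = A ** C - B ** C"
  by (simp add: vec_eq_iff matrix_matrix_mult_def algebra_simps sum_subtractf)
lemma mult_diff_left: "(C::'n::finite cmat) ** (A - B) = C ** A - C ** B"
  by (simp add: vec_eq_iff matrix_matrix_mult_def algebra_simps sum_subtractf)
lemma scaleR_mult_left: "(r *\<^sub>R A) ** (B::'n::finite cmat) = r *\<^sub>R (A ** B)"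
  by (simp add: vec_eq_iff matrix_matrix_mult_def scaleR_sum_right)
lemma scaleR_mult_right: "(A::'n::finite cmat) ** (r *\<^sub>R B) = r *\<^sub>R (A ** B)"
  by (simp add: vec_eq_iff matrix_matrix_mult_def scaleR_sum_right)

lemma herm_trace_real: "hermitian A \<Longrightarrow> Im (trace A) = 0"
  using trace_adj[of A] unfolding hermitian_def by (metis Reals_cnj_iff complex_is_Real_iff)

lemma herm_trace_prod_real: "hermitian A \<Longrightarrow> hermitian B \<Longrightarrow> Im (trace (A ** B)) = 0"
proof -
  assume "hermitian A" "hermitian B"
  then have "cnj (trace (A ** B)) = trace (A ** B)"
    by (metis trace_adj adj_mult hermitian_def trace_mul_sym)
  then show ?thesis by (metis Reals_cnj_iff complex_is_Real_iff)
qed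

lemma f_obs_linear: "linear (f_obs c)"
  by (rule linearI) (simp_all add: f_obs_def mult_add_right trace_add scaleR_mult_left trace_scaleR)

lemma f_obs_deriv: "(f_obs c has_derivative f_obs c) (at x)"
  using f_obs_linear linear_conv_bounded_linear bounded_linear_imp_has_derivative by blast

lemma dd_f_obs: "dd (f_obs c) x = f_obs c"
  by (simp add: dd_def frechet_derivative_at[OF f_obs_deriv, symmetric])

lemma dd_e_obs: assumes "f_obs (mat 1) x = 1"
  shows "dd (e_obs b) x = (\<lambda>v. f_obs b v - e_obs b x * f_obs (mat 1) v)"
proof -
  have "(e_obs b has_derivative (\<lambda>v. f_obs b v - e_obs b x * f_obs (mat 1) v)) (at x)"
    unfolding e_obs_def[abs_def]
    apply (rule derivative_eq_intros f_obs_deriv | simp add: assms)+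
    done
  then show ?thesis by (simp add: dd_def frechet_derivative_at[symmetric])
qed


lemma row_mult_eq: "row i (P ** A) = (\<Sum>j\<in>UNIV. P$i$j *s row j (A::'a::field^'n^'m))"
  by (simp add: vec_eq_iff row_def matrix_matrix_mult_def sum_component vector_scalar_mult_def mult.commute)

lemma rank_mult_left_le: "rank (P ** A) \<le> rank (A::'a::field^'n^'m)"
proof -
  have "rows (P ** A) \<subseteq> vec.span (rows A)"
  proof
    fix r assume "r \<in> rows (P ** A)"
    then obtain i where r: "r = row i (P ** A)" by (auto simp: rows_def)
    show "r \<in> vec.span (rows A)" unfolding r row_mult_eq
      by (intro vec.span_sum vec.span_scale vec.span_base) (auto simp: rows_def)
  qed
  then have "vec.dim (rows (P ** A)) \<le> vec.dim (rows A)"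
    using vec.dim_mono by blast
  then show ?thesis by (simp add: row_rank_def_gen)
qed

lemma row_mult_right: "row i ((A::'a::field^'n^'m) ** Q) = transpose Q *v row i A"
  by (simp add: vec_eq_iff row_def matrix_matrix_mult_def matrix_vector_mult_def transpose_def mult.commute)

lemma rank_mult_right_le: "rank (A ** Q) \<le> rank (A::'a::field^'n^'m)"
proof -
  have "rows (A ** Q) = (\<lambda>r. transpose Q *v r) ` rows A"
    by (auto simp: rows_def row_mult_right)
  then have "vec.dim (rows (A ** Q)) \<le> vec.dim (rows A)"
    using vec.dim_image_le[OF matrix_vector_mul_linear_gen] by metis
  then show ?thesis by (simp add: row_rank_def_gen)
qed

lemma rank_invertible:
  fixes A P Q :: "'a::field^'n^'n"
  assumes "invertible P" "invertible Q"
  shows "rank (P ** A ** Q) = rank A"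
proof -
  obtain P' where P': "P' ** P = mat 1" using assms(1) invertible_left_inverse by blast
  obtain Q' where Q': "Q ** Q' = mat 1" using assms(2) invertible_right_inverse by blast
  have "P' ** (P ** A ** Q) ** Q' = (P' ** P) ** A ** (Q ** Q')"
    by (simp only: matrix_mul_assoc)
  then have "A = P' ** (P ** A ** Q) ** Q'" by (simp add: P' Q')
  then have "rank A \<le> rank (P ** A ** Q)"
    by (metis rank_mult_left_le rank_mult_right_le order_trans)
  moreover have "rank (P ** A ** Q) \<le> rank A"
    by (metis rank_mult_left_le rank_mult_right_le order_trans)
  ultimately show ?thesis by simp
qed


lemma Mexp:
  fixes E \<rho> :: "'n::finite cmat"
  shows "(mat 1 + t *\<^sub>R E) ** \<rho> ** adj (mat 1 + t *\<^sub>R E)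
     = \<rho> + t *\<^sub>R (E ** \<rho> + \<rho> ** adj E) + (t^2) *\<^sub>R (E ** \<rho> ** adj E)"
  by (simp add: adj_add adj_mat1 adj_scaleR matrix_add_ldistrib mult_add_right scaleR_mult_left
       scaleR_mult_right algebra_simps power2_eq_square)

lemma smul_vec: "(mat 1 + t *\<^sub>R E) *v x = x + t *\<^sub>R ((E::'n::finite cmat) *v x)"
proof -
  have "(t *\<^sub>R E) *v x = t *\<^sub>R (E *v x)"
    by (simp add: vec_eq_iff matrix_vector_mult_def scaleR_sum_right)
  then show ?thesis by (simp add: matrix_vector_mult_add_rdistrib)
qed

lemma form_adj: "(\<Sum>i\<in>UNIV. cnj (x $ i) * ((S::'n::finite cmat) *v v) $ i)
    = (\<Sum>i\<in>UNIV. cnj ((adj S *v x) $ i) * v $ i)"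
proof -
  have "(\<Sum>i\<in>UNIV. cnj (x $ i) * (S *v v) $ i)
      = (\<Sum>i\<in>UNIV. \<Sum>j\<in>UNIV. cnj (x $ i) * S $ i $ j * v $ j)"
    by (simp add: matrix_vector_mult_def sum_distrib_left mult.assoc)
  also have "\<dots> = (\<Sum>j\<in>UNIV. \<Sum>i\<in>UNIV. cnj (x $ i) * S $ i $ j * v $ j)"
    by (rule sum.swap)
  also have "\<dots> = (\<Sum>j\<in>UNIV. cnj ((adj S *v x) $ j) * v $ j)"
    by (simp add: matrix_vector_mult_def adj_def sum_distrib_right sum_distrib_left cnj_sum mult_ac)
  finally show ?thesis .
qed

lemma psd_congr: assumes "psd \<rho>" shows "psd (S ** \<rho> ** adj (S::'n::finite cmat))"
  unfolding psd_def
proof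
  fix x :: "complex^'n"
  define y where "y = adj S *v x"
  have "(S ** \<rho> ** adj S) *v x = S *v (\<rho> *v y)"
    by (simp add: y_def matrix_vector_mul_assoc matrix_mul_assoc)
  then have "(\<Sum>i\<in>UNIV. cnj (x $ i) * ((S ** \<rho> ** adj S) *v x) $ i)
      = (\<Sum>i\<in>UNIV. cnj (x $ i) * (S *v (\<rho> *v y)) $ i)" by simp
  also have "\<dots> = (\<Sum>i\<in>UNIV. cnj (y $ i) * (\<rho> *v y) $ i)"
    unfolding y_def by (rule form_adj)
  finally have eq: "(\<Sum>i\<in>UNIV. cnj (x $ i) * ((S ** \<rho> ** adj S) *v x) $ i)
      = (\<Sum>i\<in>UNIV. cnj (y $ i) * (\<rho> *v y) $ i)" .
  have "0 \<le> Re (\<Sum>i\<in>UNIV. cnj (y $ i) * (\<rho> *v y) $ i)"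
    using assms unfolding psd_def by blast
  then show "0 \<le> Re (\<Sum>i\<in>UNIV. cnj (x $ i) * ((S ** \<rho> ** adj S) *v x) $ i)"
    by (simp only: eq)
qed

lemma psd_scale: assumes "psd M" "0 \<le> c" shows "psd (c *\<^sub>R (M::'n::finite cmat))"
  unfolding psd_def
proof
  fix x :: "complex^'n"
  have "(\<Sum>i\<in>UNIV. cnj (x $ i) * ((c *\<^sub>R M) *v x) $ i) = of_real c * (\<Sum>i\<in>UNIV. cnj (x $ i) * (M *v x) $ i)"
    by (simp add: matrix_vector_mult_def sum_distrib_left scaleR_conv_of_real[where 'a=complex] mult_ac)
  then show "0 \<le> Re (\<Sum>i\<in>UNIV. cnj (x $ i) * ((c *\<^sub>R M) *v x) $ i)"
    using assms unfolding psd_def by simp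
qed



lemma curve_tangent:
  fixes E \<rho> :: "'n::finite cmat"
  assumes rho: "\<rho> \<in> density_rank k"
  shows "tangent_to (density_rank k) \<rho>
     ((E ** \<rho> + \<rho> ** adj E) - Re (trace (E ** \<rho> + \<rho> ** adj E)) *\<^sub>R \<rho>)"
proof -
  define B where "B = E ** \<rho> + \<rho> ** adj E"
  define C where "C = E ** \<rho> ** adj E"
  define \<beta> where "\<beta> = Re (trace B)"
  define \<delta> where "\<delta> = Re (trace C)"
  define M where "M t = \<rho> + t *\<^sub>R B + (t^2) *\<^sub>R C" for t
  define p where "p t = 1 + t * \<beta> + t^2 * \<delta>" for t
  define S where "S t = mat 1 + t *\<^sub>R E" for t
  define \<gamma> where "\<gamma> t = (1 / p t) *\<^sub>R M t" for t
  define D where "D t = inverse (p t) *\<^sub>R (B + (2*t) *\<^sub>R C) + (- ((\<beta> + 2*t*\<delta>) * inverse (p t ^ Suc (Suc 0)))) *\<^sub>R M t" for t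
  from rho have hr: "hermitian \<rho>" and pr: "psd \<rho>" and tr: "trace \<rho> = 1" and rk: "rank \<rho> = k"
    by (auto simp: density_rank_def)
  have ar: "adj \<rho> = \<rho>" using hr by (simp add: hermitian_def)
  have hB: "adj B = B" by (simp add: B_def adj_add adj_mult ar add.commute)
  have hC: "adj C = C" by (simp add: C_def adj_mult ar matrix_mul_assoc)
  have trB: "trace B = of_real \<beta>"
    using herm_trace_real[of B] hB by (simp add: complex_eq_iff \<beta>_def hermitian_def)
  have trC: "trace C = of_real \<delta>"
    using herm_trace_real[of C] hC by (simp add: complex_eq_iff \<delta>_def hermitian_def)
  have trM: "trace (M t) = of_real (p t)" for t
    by (simp add: M_def p_def trace_add trace_scaleR trB trC tr)
  have adjM: "adj (M t) = M t" for t
    by (simp add: M_def adj_add adj_scaleR ar hB hC)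
  have SM: "S t ** \<rho> ** adj (S t) = M t" for t
    unfolding S_def M_def B_def C_def by (rule Mexp)
  obtain K where K: "K > 0" "\<And>x. norm (E *v x) \<le> norm x * K"
    using bounded_linear.pos_bounded[OF matrix_vector_mul_bounded_linear[of E]] by blast
  define \<epsilon> where "\<epsilon> = 1 / (2 * (1 + K + \<bar>\<beta>\<bar> + \<bar>\<delta>\<bar>))"
  have \<epsilon>pos: "\<epsilon> > 0" using K by (simp add: \<epsilon>_def)
  have small: "\<bar>t\<bar> \<le> 1/2 \<and> \<bar>t\<bar> * K < 1/2 \<and> \<bar>t\<bar> * (\<bar>\<beta>\<bar> + \<bar>\<delta>\<bar>) < 1/2"
    if "t \<in> {-\<epsilon><..<\<epsilon>}" for t
  proof -
    define Q where "Q = 1 + K + \<bar>\<beta>\<bar> + \<bar>\<delta>\<bar>"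
    have Qp: "Q > 0" using K by (simp add: Q_def)
    have a: "\<bar>t\<bar> < \<epsilon>" using that by auto
    have "\<bar>t\<bar> * Q < \<epsilon> * Q" using a Qp by (rule mult_strict_right_mono)
    also have "\<epsilon> * Q = 1/2" using Qp by (simp add: \<epsilon>_def Q_def)
    finally have b: "\<bar>t\<bar> * Q < 1/2" .
    have e: "\<bar>t\<bar> * Q = \<bar>t\<bar> + \<bar>t\<bar> * K + \<bar>t\<bar> * (\<bar>\<beta>\<bar> + \<bar>\<delta>\<bar>)"
      by (simp add: Q_def algebra_simps)
    have "0 \<le> \<bar>t\<bar> * K" using K by simp
    moreover have "0 \<le> \<bar>t\<bar> * (\<bar>\<beta>\<bar> + \<bar>\<delta>\<bar>)" by simp
    ultimately show ?thesis using b e by linarith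
  qed
  have ppos: "p t > 0" if "t \<in> {-\<epsilon><..<\<epsilon>}" for t
  proof -
    from small[OF that] have s: "\<bar>t\<bar> \<le> 1/2" "\<bar>t\<bar> * (\<bar>\<beta>\<bar> + \<bar>\<delta>\<bar>) < 1/2" by auto
    have "\<bar>t * \<beta>\<bar> \<le> \<bar>t\<bar> * \<bar>\<beta>\<bar>" by (simp add: abs_mult)
    moreover have "\<bar>t^2 * \<delta>\<bar> \<le> \<bar>t\<bar> * \<bar>\<delta>\<bar>"
    proof -
      have "\<bar>t^2 * \<delta>\<bar> = \<bar>t\<bar> * (\<bar>t\<bar> * \<bar>\<delta>\<bar>)" by (simp add: abs_mult power2_eq_square)
      also have "\<dots> \<le> 1 * (\<bar>t\<bar> * \<bar>\<delta>\<bar>)" using s by (intro mult_right_mono) auto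
      finally show ?thesis by simp
    qed
    ultimately have c1: "-(\<bar>t\<bar> * \<bar>\<beta>\<bar>) \<le> t * \<beta>" and c2: "-(\<bar>t\<bar> * \<bar>\<delta>\<bar>) \<le> t^2 * \<delta>"
      using abs_ge_minus_self[of "t * \<beta>"] abs_ge_minus_self[of "t^2 * \<delta>"] by linarith+
    have "\<bar>t\<bar> * (\<bar>\<beta>\<bar> + \<bar>\<delta>\<bar>) = \<bar>t\<bar> * \<bar>\<beta>\<bar> + \<bar>t\<bar> * \<bar>\<delta>\<bar>" by (simp add: distrib_left)
    then show ?thesis using s c1 c2 unfolding p_def by linarith
  qed
  have inj: "\<forall>x. S t *v x = 0 \<longrightarrow> x = 0" if "t \<in> {-\<epsilon><..<\<epsilon>}" for t
  proof (intro allI impI)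
    fix x assume "S t *v x = 0"
    then have "x = - (t *\<^sub>R (E *v x))" unfolding S_def smul_vec by (simp add: eq_neg_iff_add_eq_0)
    then have "norm x = norm (- (t *\<^sub>R (E *v x)))" by (rule arg_cong)
    then have "norm x = \<bar>t\<bar> * norm (E *v x)" by simp
    also have "\<dots> \<le> \<bar>t\<bar> * (norm x * K)" using K by (simp add: mult_left_mono)
    also have "\<dots> = (\<bar>t\<bar> * K) * norm x" by simp
    finally have "norm x \<le> (\<bar>t\<bar> * K) * norm x" .
    moreover have "(\<bar>t\<bar> * K) * norm x \<le> (1/2) * norm x"
      using small[OF that] by (intro mult_right_mono) auto
    ultimately have "norm x \<le> 0" by linarith
    then show "x = 0" by simp
  qed
  have inD: "\<gamma> t \<in> density_rank k" if t: "t \<in> {-\<epsilon><..<\<epsilon>}" for t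
  proof -
    obtain S' where S': "S' ** S t = mat 1"
      using inj[OF t] matrix_left_invertible_ker by blast
    have pt: "p t > 0" using ppos[OF t] .
    have g: "\<gamma> t = ((1 / p t) *\<^sub>R S t) ** \<rho> ** adj (S t)"
      by (simp add: \<gamma>_def scaleR_mult_left SM)
    have i1: "invertible ((1 / p t) *\<^sub>R S t)"
      unfolding invertible_left_inverse
      by (rule exI[of _ "p t *\<^sub>R S'"]) (simp add: scaleR_mult_left scaleR_mult_right S' less_imp_neq[OF pt, symmetric])
    have i2: "invertible (adj (S t))"
      unfolding invertible_right_inverse
      by (rule exI[of _ "adj S'"]) (simp add: adj_mult[symmetric] S' adj_mat1)
    have "hermitian (\<gamma> t)" by (simp add: hermitian_def \<gamma>_def adj_scaleR adjM)
    moreover have "psd (\<gamma> t)" unfolding \<gamma>_def using pt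
      by (intro psd_scale) (auto simp: SM[symmetric] intro: psd_congr pr)
    moreover have "trace (\<gamma> t) = 1"
      using pt by (simp add: \<gamma>_def trace_scaleR trM)
    moreover have "rank (\<gamma> t) = k" unfolding g using rank_invertible[OF i1 i2] rk by simp
    ultimately show ?thesis by (simp add: density_rank_def)
  qed
  have deriv: "(\<gamma> has_vector_derivative D t) (at t)" if pt: "p t \<noteq> 0" for t
  proof -
    have dp: "(p has_real_derivative (\<beta> + 2*t*\<delta>)) (at t)"
      unfolding p_def[abs_def] by (auto intro!: derivative_eq_intros)
    have dM: "(M has_vector_derivative (B + (2*t) *\<^sub>R C)) (at t)"
      unfolding M_def[abs_def] by (auto intro!: derivative_eq_intros)
    have g: "\<gamma> = (\<lambda>t. inverse (p t) *\<^sub>R M t)"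
      by (simp add: \<gamma>_def[abs_def] inverse_eq_divide)
    show ?thesis unfolding g D_def
      by (rule has_vector_derivative_scaleR[OF DERIV_inverse_fun[OF dp pt] dM])
  qed
  have contp: "continuous_on {-\<epsilon><..<\<epsilon>} p"
    unfolding p_def[abs_def] by (intro continuous_intros)
  have cont: "continuous_on {-\<epsilon><..<\<epsilon>} D"
    unfolding D_def M_def
    apply (intro continuous_intros contp)
    apply (auto dest!: ppos)
    done
  have g0: "\<gamma> 0 = \<rho>" by (simp add: \<gamma>_def p_def M_def)
  have "D 0 = B - \<beta> *\<^sub>R \<rho>" by (simp add: D_def p_def M_def)
  then have d0: "(\<gamma> has_vector_derivative (B - \<beta> *\<^sub>R \<rho>)) (at 0)"
    using deriv[of 0] by (simp add: p_def)
  have C1: "\<gamma> C1_differentiable_on {-\<epsilon><..<\<epsilon>}"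
  proof -
    have "\<forall>x\<in>{-\<epsilon><..<\<epsilon>}. (\<gamma> has_vector_derivative D x) (at x)"
      using deriv ppos by force
    then show ?thesis unfolding C1_differentiable_on_def using cont by blast
  qed
  have "tangent_to (density_rank k) \<rho> (B - \<beta> *\<^sub>R \<rho>)"
    unfolding tangent_to_def using \<epsilon>pos C1 inD g0 d0 by blast
  then show ?thesis by (simp add: B_def \<beta>_def)
qed


lemma f_obs_add: "f_obs c (x + y) = f_obs c x + f_obs c y"
  by (simp add: f_obs_def mult_add_right trace_add)
lemma f_obs_scale: "f_obs c (r *\<^sub>R x) = r * f_obs c x"
  by (simp add: f_obs_def scaleR_mult_left trace_scaleR)

lemma lin_dE: "linear (\<lambda>v. f_obs b v - e * f_obs (mat 1) v)"
  by (intro linearI) (simp_all add: f_obs_add f_obs_scale algebra_simps)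

lemma lin_sc: "linear (\<lambda>v. e * f_obs (mat 1) v)"
  by (intro linearI) (simp_all add: f_obs_add f_obs_scale algebra_simps)

lemma cscale_neg_swap: "cscale (-z) (A - B) = cscale z (B - A)"
  by (simp add: cscale_def vec_eq_iff algebra_simps)

theorem mainTheorem5:
  fixes L R :: "('n::finite) cmat \<Rightarrow> ('n cmat \<Rightarrow> real) \<Rightarrow> ('n cmat \<Rightarrow> real) \<Rightarrow> real"
    and a \<rho> :: "'n cmat" and k :: nat
  assumes "Lambda_D L" and "R_D R"
    and "hermitian a"
    and "1 \<le> k" and "k \<le> CARD('n)"
    and "\<rho> \<in> density_rank k"
  shows "let vX = cscale (\<i> / 2) (a ** \<rho> - \<rho> ** a);
             vY = cscale (1/2) (a ** \<rho> + \<rho> ** a) - cscale (trace (\<rho> ** a)) \<rho>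
         in hermitian vX \<and> hermitian vY
          \<and> (\<forall>c. hermitian c \<longrightarrow> dd (f_obs c) \<rho> vX = L \<rho> (dd (e_obs a) \<rho>) (dd (f_obs c) \<rho>))
          \<and> (\<forall>c. hermitian c \<longrightarrow> dd (f_obs c) \<rho> vY = R \<rho> (dd (e_obs a) \<rho>) (dd (f_obs c) \<rho>))
          \<and> tangent_to (density_rank k) \<rho> vX
          \<and> tangent_to (density_rank k) \<rho> vY"
proof -
  define vX where "vX = cscale (\<i> / 2) (a ** \<rho> - \<rho> ** a)"
  define \<tau> where "\<tau> = trace (\<rho> ** a)"
  define vY where "vY = cscale (1/2) (a ** \<rho> + \<rho> ** a) - cscale \<tau> \<rho>"
  have hr: "hermitian \<rho>" and tr: "trace \<rho> = 1"
    using assms(6) by (auto simp: density_rank_def)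
  have ar: "adj \<rho> = \<rho>" using hr by (simp add: hermitian_def)
  have aa: "adj a = a" using assms(3) by (simp add: hermitian_def)
  have f1: "f_obs (mat 1) \<rho> = 1" by (simp add: f_obs_def tr)
  have U: "\<rho> \<in> U_set" using hr f1 by (simp add: U_set_def)
  have \<tau>real: "Im \<tau> = 0" unfolding \<tau>_def by (rule herm_trace_prod_real[OF hr assms(3)])
  have cnj\<tau>: "cnj \<tau> = \<tau>" using \<tau>real by (simp add: complex_eq_iff)
  have \<tau>of: "of_real (Re \<tau>) = \<tau>" using \<tau>real by (simp add: complex_eq_iff)
  have eq_e: "e_obs b \<rho> = f_obs b \<rho>" for b by (simp add: e_obs_def f1)
  have dE: "dd (e_obs b) \<rho> = (\<lambda>v. f_obs b v - e_obs b \<rho> * f_obs (mat 1) v)" for b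
    by (rule dd_e_obs[OF f1])
  have dF: "dd (f_obs c) \<rho> = f_obs c" for c by (rule dd_f_obs)
  have decomp: "f_obs c = (\<lambda>v. dd (e_obs c) \<rho> v + (\<lambda>v. e_obs c \<rho> * dd (f_obs (mat 1)) \<rho> v) v)" for c
    by (simp add: dE dF)
  have linE: "linear (dd (e_obs b) \<rho>)" for b unfolding dE by (rule lin_dE)
  have linS: "linear (\<lambda>v. e * dd (f_obs (mat 1)) \<rho> v)" for e unfolding dF by (rule lin_sc)
  have linF: "linear (dd (f_obs (mat 1)) \<rho>)" unfolding dF by (rule f_obs_linear)
  have reduce: "T \<rho> (dd (e_obs a) \<rho>) (dd (f_obs c) \<rho>)
      = T \<rho> (dd (e_obs a) \<rho>) (dd (e_obs c) \<rho>)"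
    if bc: "bilin_cov (T \<rho>)" and z: "T \<rho> (dd (e_obs a) \<rho>) (dd (f_obs (mat 1)) \<rho>) = 0" for T c
  proof -
    have "T \<rho> (dd (e_obs a) \<rho>) (dd (f_obs c) \<rho>)
        = T \<rho> (dd (e_obs a) \<rho>) (\<lambda>v. dd (e_obs c) \<rho> v + (\<lambda>v. e_obs c \<rho> * dd (f_obs (mat 1)) \<rho> v) v)"
      using decomp[of c] dF[of c] by simp
    also have "\<dots> = T \<rho> (dd (e_obs a) \<rho>) (dd (e_obs c) \<rho>)
                   + T \<rho> (dd (e_obs a) \<rho>) (\<lambda>v. e_obs c \<rho> * dd (f_obs (mat 1)) \<rho> v)"
      using bc linE linS unfolding bilin_cov_def by blast
    also have "T \<rho> (dd (e_obs a) \<rho>) (\<lambda>v. e_obs c \<rho> * dd (f_obs (mat 1)) \<rho> v)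
        = e_obs c \<rho> * T \<rho> (dd (e_obs a) \<rho>) (dd (f_obs (mat 1)) \<rho>)"
      using bc linE linF unfolding bilin_cov_def by blast
    finally show ?thesis using z by simp
  qed
  have tr3: "trace (\<rho> ** c ** a) = trace (a ** \<rho> ** c)" for c
  proof -
    have "trace ((\<rho> ** c) ** a) = trace (a ** (\<rho> ** c))" by (rule trace_mul_sym)
    then show ?thesis by (simp add: matrix_mul_assoc)
  qed
  have trar: "trace (a ** \<rho>) = trace (\<rho> ** a)" by (rule trace_mul_sym)
  have hX: "hermitian vX"
  proof -
    have "adj vX = cscale (- (\<i> / 2)) (\<rho> ** a - a ** \<rho>)"
      by (simp add: vX_def adj_cscale adj_diff adj_mult ar aa)
    then show ?thesis by (simp add: hermitian_def cscale_neg_swap vX_def)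
  qed
  have hY: "hermitian vY"
    by (simp add: hermitian_def vY_def adj_cscale adj_diff adj_add adj_mult ar aa cnj\<tau> add.commute)
  have LX: "dd (f_obs c) \<rho> vX = L \<rho> (dd (e_obs a) \<rho>) (dd (f_obs c) \<rho>)" if hc: "hermitian c" for c
  proof -
    from assms(1) U have bc: "bilin_cov (L \<rho>)"
      and v: "L \<rho> (dd (e_obs a) \<rho>) (dd (e_obs c) \<rho>) = e_obs (qbracket a c) \<rho>"
      and z: "L \<rho> (dd (e_obs a) \<rho>) (dd (f_obs (mat 1)) \<rho>) = 0"
      using assms(3) hc unfolding Lambda_D_def by blast+
    have "trace (vX ** c) = trace (\<rho> ** qbracket a c)"
      by (simp add: vX_def qbracket_def cscale_mult_left cscale_mult_right mult_diff_right mult_diff_left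
          trace_cscale trace_sub matrix_mul_assoc tr3 algebra_simps)
    then show ?thesis using reduce[of L c, OF bc z] v by (simp add: dF eq_e f_obs_def)
  qed
  have RY: "dd (f_obs c) \<rho> vY = R \<rho> (dd (e_obs a) \<rho>) (dd (f_obs c) \<rho>)" if hc: "hermitian c" for c
  proof -
    from assms(2) U have bc: "bilin_cov (R \<rho>)"
      and v: "R \<rho> (dd (e_obs a) \<rho>) (dd (e_obs c) \<rho>) = e_obs (jordan a c) \<rho> - e_obs a \<rho> * e_obs c \<rho>"
      and z: "R \<rho> (dd (e_obs a) \<rho>) (dd (f_obs (mat 1)) \<rho>) = 0"
      using assms(3) hc unfolding R_D_def by blast+
    have t: "trace (vY ** c) = trace (\<rho> ** jordan a c) - \<tau> * trace (\<rho> ** c)"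
      by (simp add: vY_def jordan_def cscale_mult_left cscale_mult_right mult_diff_right mult_add_right
          matrix_add_ldistrib trace_cscale trace_sub trace_add matrix_mul_assoc tr3 algebra_simps)
    have "Re (\<tau> * trace (\<rho> ** c)) = Re \<tau> * Re (trace (\<rho> ** c))"
      using \<tau>real by simp
    then show ?thesis using reduce[of R c, OF bc z] v t by (simp add: dF eq_e f_obs_def \<tau>_def)
  qed
  have TX: "tangent_to (density_rank k) \<rho> vX"
  proof -
    have c: "cnj (\<i>/2) = -(\<i>/2)" by simp
    have "cscale (\<i>/2) a ** \<rho> + \<rho> ** adj (cscale (\<i>/2) a)
        = cscale (\<i>/2) (a ** \<rho>) + cscale (-(\<i>/2)) (\<rho> ** a)"
      by (simp only: adj_cscale aa c cscale_mult_left cscale_mult_right)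
    also have "\<dots> = vX" unfolding vX_def by (simp add: cscale_def vec_eq_iff algebra_simps)
    finally have "cscale (\<i>/2) a ** \<rho> + \<rho> ** adj (cscale (\<i>/2) a) = vX" .
    moreover have "trace vX = 0"
      by (simp add: vX_def trace_cscale trace_sub trar)
    ultimately show ?thesis using curve_tangent[OF assms(6), of "cscale (\<i>/2) a"] by simp
  qed
  have TY: "tangent_to (density_rank k) \<rho> vY"
  proof -
    have B: "cscale (1/2) a ** \<rho> + \<rho> ** adj (cscale (1/2) a) = cscale (1/2) (a ** \<rho> + \<rho> ** a)"
      by (simp add: adj_cscale aa cscale_mult_left cscale_mult_right cscale_add)
    have "trace (cscale (1/2) (a ** \<rho> + \<rho> ** a)) = \<tau>"
      by (simp add: trace_cscale trace_add trar \<tau>_def)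
    then have "Re (trace (cscale (1/2) (a ** \<rho> + \<rho> ** a))) *\<^sub>R \<rho> = cscale \<tau> \<rho>"
      by (simp add: cscale_real[symmetric] \<tau>of)
    then show ?thesis using curve_tangent[OF assms(6), of "cscale (1/2) a"] B by (simp add: vY_def)
  qed
  show ?thesis unfolding Let_def
    using hX hY LX RY TX TY by (simp add: vX_def vY_def \<tau>_def)
qed

end
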